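(* Assume Condition (C) and $\lambda/2<h<\lambda$. If $\eta\in\mathcal X$ contains a pair of nearest-neighbour sites $i,j\in\Lambda$ with $\eta(i)=+1$, $\eta(j)=-1$, then there is a downhill path (one along which $H$ is non-increasing) from $\eta$ to a configuration $\eta'$ with $H(\eta')<H(\eta)$; in particular $V_\eta=0$.
   Context: Let $\Lambda=\{1,\dots,L\}^2$, $\mathcal X=\{-1,0,+1\}^\Lambda$, $\partial^-\Lambda$ the sites of $\Lambda$ with a nearest neighbour outside $\Lambda$. Hamiltonian: $H(\eta)=\frac J2\sum_{i,j\in\Lambda,|i-j|=1}[\eta(i)-\eta(j)]^2+J\sum_{i\in\partial^-\Lambda}\sum_{j\notin\Lambda,|i-j|=1}\eta(i)^2-\lambda\sum_{i}\eta(i)^2-h\sum_i\eta(i)$. Condition (C): $J$ sufficiently large compared to $\lambda,h>0$; $L>(2J/(\lambda-h))^3$; none of $\tfrac{2J}{\lambda+h},\tfrac{2J}{\lambda-h},\tfrac{2J+\lambda-h}{\lambda+h},\tfrac{J+\lambda+h}{h}$ is an integer. A path is a sequence of configurations with consecutive ones differing at exactly one site. $V_\eta=\Phi(\eta,\{\zeta:H(\zeta)<H(\eta)\})-H(\eta)$ where $\Phi(\eta,A)$ is the minimal over paths from $\eta$ to $A$ of the maximum of $H$ along the path. *)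

theory Defs
  imports Complex_Main
begin

type_synonym site = "int \<times> int"
type_synonym config = "site \<Rightarrow> int"

definition box :: "nat \<Rightarrow> site set" where
  "box L = {1..int L} \<times> {1..int L}"

definition nn :: "site \<Rightarrow> site \<Rightarrow> bool" where
  "nn i j \<longleftrightarrow> \<bar>fst i - fst j\<bar> + \<bar>snd i - snd j\<bar> = 1"

definition nbrs :: "site \<Rightarrow> site set" where
  "nbrs i = {j. nn i j}"

definition inner_boundary :: "nat \<Rightarrow> site set" where
  "inner_boundary L = {i \<in> box L. \<exists>j. nn i j \<and> j \<notin> box L}"

definition configs :: "nat \<Rightarrow> config set" where
  "configs L = {\<eta>. (\<forall>i \<in> box L. \<eta> i \<in> {-1,0,1}) \<and> (\<forall>i. i \<notin> box L \<longrightarrow> \<eta> i = 0)}"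

definition Ham :: "nat \<Rightarrow> real \<Rightarrow> real \<Rightarrow> real \<Rightarrow> config \<Rightarrow> real" where
  "Ham L J lam h \<eta> =
     J / 2 * (\<Sum>i\<in>box L. \<Sum>j\<in>box L \<inter> nbrs i. (real_of_int (\<eta> i - \<eta> j))^2)
   + J * (\<Sum>i\<in>inner_boundary L. \<Sum>j\<in>nbrs i - box L. (real_of_int (\<eta> i))^2)
   - lam * (\<Sum>i\<in>box L. (real_of_int (\<eta> i))^2)
   - h * (\<Sum>i\<in>box L. real_of_int (\<eta> i))"

definition is_path :: "nat \<Rightarrow> config list \<Rightarrow> bool" where
  "is_path L p \<longleftrightarrow> p \<noteq> [] \<and> set p \<subseteq> configs L \<and>
     (\<forall>k. Suc k < length p \<longrightarrow> (\<exists>!i. (p ! k) i \<noteq> (p ! Suc k) i))"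

definition downhill :: "nat \<Rightarrow> real \<Rightarrow> real \<Rightarrow> real \<Rightarrow> config list \<Rightarrow> bool" where
  "downhill L J lam h p \<longleftrightarrow>
     (\<forall>k. Suc k < length p \<longrightarrow> Ham L J lam h (p ! Suc k) \<le> Ham L J lam h (p ! k))"

definition Phi :: "nat \<Rightarrow> real \<Rightarrow> real \<Rightarrow> real \<Rightarrow> config \<Rightarrow> config set \<Rightarrow> real" where
  "Phi L J lam h \<eta> A = Inf {Max (Ham L J lam h ` set p) | p.
       is_path L p \<and> hd p = \<eta> \<and> last p \<in> A}"

definition stab :: "nat \<Rightarrow> real \<Rightarrow> real \<Rightarrow> real \<Rightarrow> config \<Rightarrow> real" where
  "stab L J lam h \<eta> =
     Phi L J lam h \<eta> {\<zeta> \<in> configs L. Ham L J lam h \<zeta> < Ham L J lam h \<eta>} - Ham L J lam h \<eta>"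

end

theory Submission
  imports Defs
begin

lemma double_sum_update:
  fixes g :: "'a \<Rightarrow> real"
  assumes fin: "finite A" and kA: "k \<in> A" and sym: "\<And>i j. j \<in> N i \<longleftrightarrow> i \<in> N j"
    and irr: "\<And>i. i \<notin> N i"
  shows "(\<Sum>i\<in>A. \<Sum>j\<in>A\<inter>N i. ((g(k:=c)) i - (g(k:=c)) j)^2) - (\<Sum>i\<in>A. \<Sum>j\<in>A\<inter>N i. (g i - g j)^2)
     = 2 * (\<Sum>j\<in>A\<inter>N k. (c - g j)^2 - (g k - g j)^2)"
proof -
  define g' where "g' = g(k:=c)"
  define d where "d i j = (g' i - g' j)^2 - (g i - g j)^2" for i j
  have fin2: "\<And>i. finite (A \<inter> N i)" using fin by simp
  have "(\<Sum>i\<in>A. \<Sum>j\<in>A\<inter>N i. (g' i - g' j)^2) - (\<Sum>i\<in>A. \<Sum>j\<in>A\<inter>N i. (g i - g j)^2)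
      = (\<Sum>i\<in>A. \<Sum>j\<in>A\<inter>N i. d i j)"
    by (simp add: d_def sum_subtractf)
  also have "\<dots> = (\<Sum>i\<in>A. \<Sum>j\<in>A\<inter>N i. (if i = k then d k j else 0) + (if j = k then d i k else 0))"
  proof (intro sum.cong refl)
    fix i j assume "j \<in> A \<inter> N i"
    then have "i \<noteq> j" using irr by auto
    then show "d i j = (if i = k then d k j else 0) + (if j = k then d i k else 0)"
      by (auto simp: d_def g'_def)
  qed
  also have "\<dots> = (\<Sum>i\<in>A. \<Sum>j\<in>A\<inter>N i. (if i = k then d k j else 0))
      + (\<Sum>i\<in>A. \<Sum>j\<in>A\<inter>N i. (if j = k then d i k else 0))"
    by (simp add: sum.distrib)
  also have "(\<Sum>i\<in>A. \<Sum>j\<in>A\<inter>N i. (if i = k then d k j else 0)) = (\<Sum>j\<in>A\<inter>N k. d k j)"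
  proof -
    have "(\<Sum>i\<in>A. \<Sum>j\<in>A\<inter>N i. (if i = k then d k j else 0)) = (\<Sum>i\<in>A. if i = k then (\<Sum>j\<in>A\<inter>N k. d k j) else 0)"
      by (intro sum.cong refl) auto
    also have "\<dots> = (\<Sum>j\<in>A\<inter>N k. d k j)" using fin kA by simp
    finally show ?thesis .
  qed
  also have "(\<Sum>i\<in>A. \<Sum>j\<in>A\<inter>N i. (if j = k then d i k else 0)) = (\<Sum>i\<in>A. if k \<in> N i then d i k else 0)"
  proof (intro sum.cong refl)
    fix i assume "i \<in> A"
    have "(\<Sum>j\<in>A\<inter>N i. (if j = k then d i k else 0)) = (if k \<in> A \<inter> N i then d i k else 0)"
      using fin2[of i] by (simp add: sum.delta)
    then show "(\<Sum>j\<in>A\<inter>N i. (if j = k then d i k else 0)) = (if k \<in> N i then d i k else 0)"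
      using kA by simp
  qed
  also have "\<dots> = (\<Sum>i\<in>{x\<in>A. k \<in> N x}. d i k)"
    using fin by (simp add: sum.inter_filter)
  also have "{x\<in>A. k \<in> N x} = A \<inter> N k" using sym by auto
  also have "(\<Sum>i\<in>A \<inter> N k. d i k) = (\<Sum>j\<in>A\<inter>N k. d k j)"
    by (intro sum.cong refl) (simp add: d_def power2_commute)
  also have "(\<Sum>j\<in>A\<inter>N k. d k j) = (\<Sum>j\<in>A\<inter>N k. (c - g j)^2 - (g k - g j)^2)"
  proof (intro sum.cong refl)
    fix j assume "j \<in> A \<inter> N k"
    then have "j \<noteq> k" using irr by auto
    then show "d k j = (c - g j)^2 - (g k - g j)^2" by (simp add: d_def g'_def)
  qed
  finally show ?thesis by (simp add: g'_def)
qed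


lemma finite_box: "finite (box L)"
  unfolding box_def by simp

lemma nn_sym: "nn i j \<longleftrightarrow> nn j i"
  unfolding nn_def by arith

lemma nn_irr: "\<not> nn i i"
  unfolding nn_def by simp

lemma nbrs_eq: "nbrs (a,b) = {(a+1,b),(a-1,b),(a,b+1),(a,b-1)}"
proof (rule set_eqI)
  fix x :: site
  show "x \<in> nbrs (a,b) \<longleftrightarrow> x \<in> {(a+1,b),(a-1,b),(a,b+1),(a,b-1)}"
    by (cases x) (auto simp: nbrs_def nn_def abs_if split: if_splits)
qed

lemma finite_nbrs: "finite (nbrs i)"
  by (cases i) (simp add: nbrs_eq)

lemma card_nbrs: "card (nbrs i) = 4"
  by (cases i) (simp add: nbrs_eq)

lemma configs_out: "\<eta> \<in> configs L \<Longrightarrow> i \<notin> box L \<Longrightarrow> \<eta> i = 0"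
  unfolding configs_def by (cases i) auto

lemma configs_val: "\<eta> \<in> configs L \<Longrightarrow> \<eta> i \<in> {-1,0,1}"
  unfolding configs_def by (cases "i \<in> box L"; cases i) auto

lemma configs_upd: "\<eta> \<in> configs L \<Longrightarrow> k \<in> box L \<Longrightarrow> b \<in> {-1,0,1} \<Longrightarrow> \<eta>(k:=b) \<in> configs L"
  unfolding configs_def by auto

lemma ham_update:
  assumes cf: "\<eta> \<in> configs L" and kb: "k \<in> box L"
  shows "Ham L J lam h (\<eta>(k:=b)) - Ham L J lam h \<eta> =
     J * (\<Sum>m\<in>nbrs k. (real_of_int b - real_of_int (\<eta> m))^2 - (real_of_int (\<eta> k) - real_of_int (\<eta> m))^2)
     - lam * ((real_of_int b)^2 - (real_of_int (\<eta> k))^2) - h * (real_of_int b - real_of_int (\<eta> k))"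
proof -
  define g where "g i = real_of_int (\<eta> i)" for i
  define c where "c = real_of_int b"
  define \<eta>' where "\<eta>' = \<eta>(k:=b)"
  have g': "(\<lambda>i. real_of_int (\<eta>' i)) = g(k:=c)" by (auto simp: \<eta>'_def g_def c_def)
  have t1: "(\<Sum>i\<in>box L. \<Sum>j\<in>box L \<inter> nbrs i. (real_of_int (\<eta>' i - \<eta>' j))^2)
     - (\<Sum>i\<in>box L. \<Sum>j\<in>box L \<inter> nbrs i. (real_of_int (\<eta> i - \<eta> j))^2)
     = 2 * (\<Sum>j\<in>box L \<inter> nbrs k. (c - g j)^2 - (g k - g j)^2)"
  proof -
    have "(\<Sum>i\<in>box L. \<Sum>j\<in>box L \<inter> nbrs i. (real_of_int (\<eta>' i - \<eta>' j))^2)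
        = (\<Sum>i\<in>box L. \<Sum>j\<in>box L \<inter> nbrs i. ((g(k:=c)) i - (g(k:=c)) j)^2)"
      unfolding of_int_diff by (simp add: g'[symmetric])
    moreover have "(\<Sum>i\<in>box L. \<Sum>j\<in>box L \<inter> nbrs i. (real_of_int (\<eta> i - \<eta> j))^2)
        = (\<Sum>i\<in>box L. \<Sum>j\<in>box L \<inter> nbrs i. (g i - g j)^2)"
      unfolding of_int_diff g_def by simp
    ultimately show ?thesis
      using double_sum_update[OF finite_box kb, of nbrs g c]
      by (simp add: nbrs_def nn_sym nn_irr)
  qed
  have t2: "(\<Sum>i\<in>inner_boundary L. \<Sum>j\<in>nbrs i - box L. (real_of_int (\<eta>' i))^2)
     - (\<Sum>i\<in>inner_boundary L. \<Sum>j\<in>nbrs i - box L. (real_of_int (\<eta> i))^2)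
     = (\<Sum>j\<in>nbrs k - box L. c^2 - (g k)^2)"
  proof -
    have fib: "finite (inner_boundary L)"
      using finite_box by (rule finite_subset[rotated]) (auto simp: inner_boundary_def)
    have "(\<Sum>i\<in>inner_boundary L. \<Sum>j\<in>nbrs i - box L. (real_of_int (\<eta>' i))^2)
     - (\<Sum>i\<in>inner_boundary L. \<Sum>j\<in>nbrs i - box L. (real_of_int (\<eta> i))^2)
     = (\<Sum>i\<in>inner_boundary L. \<Sum>j\<in>nbrs i - box L. (real_of_int (\<eta>' i))^2 - (real_of_int (\<eta> i))^2)"
      by (simp only: sum_subtractf)
    also have "\<dots> = (\<Sum>i\<in>inner_boundary L. if i = k then (\<Sum>j\<in>nbrs k - box L. c^2 - (g k)^2) else 0)"
      by (intro sum.cong refl) (auto simp: \<eta>'_def c_def g_def)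
    also have "\<dots> = (if k \<in> inner_boundary L then (\<Sum>j\<in>nbrs k - box L. c^2 - (g k)^2) else 0)"
      using fib by simp
    also have "\<dots> = (\<Sum>j\<in>nbrs k - box L. c^2 - (g k)^2)"
    proof (cases "k \<in> inner_boundary L")
      case False
      then have e: "nbrs k - box L = {}" using kb by (auto simp: inner_boundary_def nbrs_def)
      show ?thesis unfolding e using False by (simp only: if_False sum.empty)
    qed simp
    finally show ?thesis .
  qed
  have t3: "(\<Sum>i\<in>box L. (real_of_int (\<eta>' i))^2) - (\<Sum>i\<in>box L. (real_of_int (\<eta> i))^2) = c^2 - (g k)^2"
  proof -
    have "(\<Sum>i\<in>box L. (real_of_int (\<eta>' i))^2) - (\<Sum>i\<in>box L. (real_of_int (\<eta> i))^2)
       = (\<Sum>i\<in>box L. (real_of_int (\<eta>' i))^2 - (real_of_int (\<eta> i))^2)" by (simp add: sum_subtractf)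
    also have "\<dots> = (\<Sum>i\<in>box L. if i = k then c^2 - (g k)^2 else 0)"
      by (intro sum.cong refl) (auto simp: \<eta>'_def c_def g_def)
    also have "\<dots> = c^2 - (g k)^2" using finite_box kb by simp
    finally show ?thesis .
  qed
  have t4: "(\<Sum>i\<in>box L. real_of_int (\<eta>' i)) - (\<Sum>i\<in>box L. real_of_int (\<eta> i)) = c - g k"
  proof -
    have "(\<Sum>i\<in>box L. real_of_int (\<eta>' i)) - (\<Sum>i\<in>box L. real_of_int (\<eta> i))
       = (\<Sum>i\<in>box L. real_of_int (\<eta>' i) - real_of_int (\<eta> i))" by (simp add: sum_subtractf)
    also have "\<dots> = (\<Sum>i\<in>box L. if i = k then c - g k else 0)"
      by (intro sum.cong refl) (auto simp: \<eta>'_def c_def g_def)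
    also have "\<dots> = c - g k" using finite_box kb by simp
    finally show ?thesis .
  qed
  have split: "(\<Sum>m\<in>nbrs k. (c - g m)^2 - (g k - g m)^2)
      = (\<Sum>m\<in>box L \<inter> nbrs k. (c - g m)^2 - (g k - g m)^2) + (\<Sum>m\<in>nbrs k - box L. c^2 - (g k)^2)"
  proof -
    have "(\<Sum>m\<in>nbrs k. (c - g m)^2 - (g k - g m)^2)
      = (\<Sum>m\<in>nbrs k \<inter> box L. (c - g m)^2 - (g k - g m)^2) + (\<Sum>m\<in>nbrs k - box L. (c - g m)^2 - (g k - g m)^2)"
      using finite_nbrs by (rule sum.Int_Diff)
    moreover have "(\<Sum>m\<in>nbrs k - box L. (c - g m)^2 - (g k - g m)^2) = (\<Sum>m\<in>nbrs k - box L. c^2 - (g k)^2)"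
      by (intro sum.cong refl) (auto simp: g_def configs_out[OF cf])
    ultimately show ?thesis by (simp add: Int_commute)
  qed
  have "Ham L J lam h \<eta>' - Ham L J lam h \<eta> =
     J / 2 * ((\<Sum>i\<in>box L. \<Sum>j\<in>box L \<inter> nbrs i. (real_of_int (\<eta>' i - \<eta>' j))^2)
     - (\<Sum>i\<in>box L. \<Sum>j\<in>box L \<inter> nbrs i. (real_of_int (\<eta> i - \<eta> j))^2))
     + J * ((\<Sum>i\<in>inner_boundary L. \<Sum>j\<in>nbrs i - box L. (real_of_int (\<eta>' i))^2)
     - (\<Sum>i\<in>inner_boundary L. \<Sum>j\<in>nbrs i - box L. (real_of_int (\<eta> i))^2))
     - lam * ((\<Sum>i\<in>box L. (real_of_int (\<eta>' i))^2) - (\<Sum>i\<in>box L. (real_of_int (\<eta> i))^2))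
     - h * ((\<Sum>i\<in>box L. real_of_int (\<eta>' i)) - (\<Sum>i\<in>box L. real_of_int (\<eta> i)))"
    unfolding Ham_def by (simp add: algebra_simps)
  also have "\<dots> = J * (\<Sum>m\<in>nbrs k. (c - g m)^2 - (g k - g m)^2) - lam * (c^2 - (g k)^2) - h * (c - g k)"
    unfolding t1 t2 t3 t4 split by (simp add: algebra_simps)
  finally show ?thesis by (simp add: \<eta>'_def c_def g_def)
qed


lemma sum4_bound:
  fixes f :: "site \<Rightarrow> real"
  assumes fS: "finite S" and cS: "card S = 4" and jS: "j \<in> S" and pS: "p \<in> S" and jp: "j \<noteq> p"
    and le1: "\<forall>m\<in>S. f m \<le> 1" and fj: "f j \<le> -3" and fp: "f p \<le> -1"
  shows "sum f S \<le> -2"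
proof -
  have "sum f S = f j + sum f (S - {j})" using fS jS by (simp add: sum.remove)
  also have "sum f (S - {j}) = f p + sum f (S - {j} - {p})"
    using fS pS jp by (subst sum.remove[of _ p]) auto
  also have "sum f (S - {j} - {p}) \<le> of_nat (card (S - {j} - {p})) * 1"
    by (rule sum_bounded_above) (use le1 in auto)
  also have "card (S - {j} - {p}) = 2" using cS jS pS jp fS by (simp add: card_Diff_singleton_if)
  finally show ?thesis using fj fp by simp
qed

lemma flip_plus:
  assumes cf: "\<eta> \<in> configs L" and ib: "i \<in> box L" and ei: "\<eta> i = 1"
    and jn: "j \<in> nbrs i" and ej: "\<eta> j = -1" and pn: "p \<in> nbrs i" and pj: "p \<noteq> j" and ep: "\<eta> p \<noteq> 1"
    and J: "J \<ge> 0"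
  shows "Ham L J lam h (\<eta>(i:=0)) - Ham L J lam h \<eta> \<le> -2 * J + lam + h"
proof -
  define f where "f m = (0 - real_of_int (\<eta> m))^2 - (real_of_int (\<eta> i) - real_of_int (\<eta> m))^2" for m
  have "sum f (nbrs i) \<le> -2"
  proof (rule sum4_bound[OF finite_nbrs[of i] card_nbrs[of i] jn pn pj[symmetric]])
    show "\<forall>m\<in>nbrs i. f m \<le> 1"
    proof
      fix m show "f m \<le> 1" using configs_val[OF cf, of m] ei by (auto simp: f_def)
    qed
    show "f j \<le> -3" using ej ei by (simp add: f_def)
    show "f p \<le> -1" using configs_val[OF cf, of p] ep ei by (auto simp: f_def)
  qed
  then have "J * sum f (nbrs i) \<le> J * (-2)" using J by (rule mult_left_mono)
  then show ?thesis using ham_update[OF cf ib, of J lam h 0] ei by (simp add: f_def)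
qed

lemma flip_minus:
  assumes cf: "\<eta> \<in> configs L" and jb: "j \<in> box L" and ej: "\<eta> j = -1"
    and jn: "i \<in> nbrs j" and ei: "\<eta> i = 1" and pn: "q \<in> nbrs j" and pj: "q \<noteq> i" and ep: "\<eta> q \<noteq> -1"
    and J: "J \<ge> 0"
  shows "Ham L J lam h (\<eta>(j:=0)) - Ham L J lam h \<eta> \<le> -2 * J + lam - h"
proof -
  define f where "f m = (0 - real_of_int (\<eta> m))^2 - (real_of_int (\<eta> j) - real_of_int (\<eta> m))^2" for m
  have "sum f (nbrs j) \<le> -2"
  proof (rule sum4_bound[OF finite_nbrs[of j] card_nbrs[of j] jn pn pj[symmetric]])
    show "\<forall>m\<in>nbrs j. f m \<le> 1"
    proof
      fix m show "f m \<le> 1" using configs_val[OF cf, of m] ej by (auto simp: f_def)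
    qed
    show "f i \<le> -3" using ej ei by (simp add: f_def)
    show "f q \<le> -1" using configs_val[OF cf, of q] ep ej by (auto simp: f_def)
  qed
  then have "J * sum f (nbrs j) \<le> J * (-2)" using J by (rule mult_left_mono)
  then show ?thesis using ham_update[OF cf jb, of J lam h 0] ej by (simp add: f_def)
qed


lemma good_flip:
  assumes cf: "\<eta> \<in> configs L" and pair: "\<exists>i\<in>box L. \<exists>j\<in>box L. nn i j \<and> \<eta> i = 1 \<and> \<eta> j = -1"
    and J: "J \<ge> lam + h" and hpos: "0 < h" and hl: "h < lam"
  shows "\<exists>k\<in>box L. \<eta> k \<noteq> 0 \<and> Ham L J lam h (\<eta>(k:=0)) < Ham L J lam h \<eta>"
proof -
  define Q where "Q = {(i,j). i\<in>box L \<and> j\<in>box L \<and> nn i j \<and> \<eta> i = 1 \<and> \<eta> j = -1}"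
  define \<phi> where "\<phi> x = fst (fst x) + snd (fst x)" for x :: "site \<times> site"
  have fQ: "finite Q" by (rule finite_subset[of _ "box L \<times> box L"]) (auto simp: Q_def finite_box)
  have neQ: "Q \<noteq> {}" using pair by (auto simp: Q_def)
  define M where "M = Max (\<phi> ` Q)"
  have "M \<in> \<phi> ` Q" unfolding M_def using fQ neQ by (intro Max_in) auto
  then obtain x where xQ: "x \<in> Q" and xM: "\<phi> x = M" by auto
  have maxM: "\<And>y. y \<in> Q \<Longrightarrow> \<phi> y \<le> M" unfolding M_def using fQ by auto
  obtain a b c e where x: "x = ((a,b),(c,e))" by (cases x) auto
  have ib: "(a,b) \<in> box L" and jb: "(c,e) \<in> box L" and nij: "nn (a,b) (c,e)"
    and ei: "\<eta> (a,b) = 1" and ej: "\<eta> (c,e) = -1" using xQ x by (auto simp: Q_def)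
  define dx :: int where "dx = (if a = c then 1 else 0)"
  define dy :: int where "dy = (if a = c then 0 else 1)"
  define ip where "ip = (a+dx, b+dy)"
  define jp where "jp = (c+dx, e+dy)"
  have geo: "ip \<in> nbrs (a,b) \<and> ip \<noteq> (c,e) \<and> jp \<in> nbrs (c,e) \<and> jp \<noteq> (a,b) \<and> nn ip jp"
    using nij by (cases "a = c") (auto simp: nbrs_def nn_def ip_def jp_def dx_def dy_def)
  have Jnn: "J \<ge> 0" using J hpos hl by linarith
  show ?thesis
  proof (cases "\<eta> ip = 1 \<and> \<eta> jp = -1")
    case True
    then have "ip \<in> box L" "jp \<in> box L" using configs_out[OF cf] by fastforce+
    then have "(ip,jp) \<in> Q" using True geo by (auto simp: Q_def)
    then have "\<phi> (ip,jp) \<le> M" by (rule maxM)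
    moreover have "\<phi> (ip,jp) = M + 1" using xM x by (simp add: \<phi>_def ip_def dx_def dy_def)
    ultimately show ?thesis by simp
  next
    case False
    then have "\<eta> ip \<noteq> 1 \<or> \<eta> jp \<noteq> -1" by simp
    then show ?thesis
    proof
      assume "\<eta> ip \<noteq> 1"
      from flip_plus[OF cf ib ei _ ej _ _ this Jnn, of lam h] geo nij
      have "Ham L J lam h (\<eta>((a,b):=0)) - Ham L J lam h \<eta> \<le> -2 * J + lam + h"
        by (auto simp: nbrs_def)
      then show ?thesis using ib ei J hpos hl by (intro bexI[of _ "(a,b)"]) auto
    next
      assume "\<eta> jp \<noteq> -1"
      from flip_minus[OF cf jb ej _ ei _ _ this Jnn, of lam h] geo nij
      have "Ham L J lam h (\<eta>((c,e):=0)) - Ham L J lam h \<eta> \<le> -2 * J + lam - h"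
        by (auto simp: nbrs_def nn_sym)
      then show ?thesis using jb ej J hpos hl by (intro bexI[of _ "(c,e)"]) auto
    qed
  qed
qed


theorem lemma4p1:
  fixes lam h :: real
  assumes "0 < h" and "lam / 2 < h" and "h < lam"
  shows "\<exists>J0. \<forall>(J::real) (L::nat) \<eta>.
    J \<ge> J0 \<longrightarrow>
    real L > (2 * J / (lam - h)) ^ 3 \<longrightarrow>
    2 * J / (lam + h) \<notin> \<int> \<longrightarrow> 2 * J / (lam - h) \<notin> \<int> \<longrightarrow>
    (2 * J + lam - h) / (lam + h) \<notin> \<int> \<longrightarrow> (J + lam + h) / h \<notin> \<int> \<longrightarrow>
    \<eta> \<in> configs L \<longrightarrow>
    (\<exists>i\<in>box L. \<exists>j\<in>box L. nn i j \<and> \<eta> i = 1 \<and> \<eta> j = -1) \<longrightarrow>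
    (\<exists>p. is_path L p \<and> hd p = \<eta> \<and> downhill L J lam h p \<and>
         Ham L J lam h (last p) < Ham L J lam h \<eta>)
    \<and> stab L J lam h \<eta> = 0"
proof (intro exI[of _ "lam + h"] allI impI)
  fix J :: real and L :: nat and \<eta> :: config
  assume J: "lam + h \<le> J" and cf: "\<eta> \<in> configs L"
    and pair: "\<exists>i\<in>box L. \<exists>j\<in>box L. nn i j \<and> \<eta> i = 1 \<and> \<eta> j = -1"
  let ?H = "Ham L J lam h"
  obtain k where kb: "k \<in> box L" and ek: "\<eta> k \<noteq> 0" and lt: "?H (\<eta>(k:=0)) < ?H \<eta>"
    using good_flip[OF cf pair J assms(1) assms(3)] by blast
  define \<eta>' where "\<eta>' = \<eta>(k:=0)"
  define p where "p = [\<eta>, \<eta>']"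
  have cf': "\<eta>' \<in> configs L" unfolding \<eta>'_def by (rule configs_upd[OF cf kb]) simp
  have uniq: "\<exists>!i. \<eta> i \<noteq> \<eta>' i"
    by (rule ex1I[of _ k]) (auto simp: \<eta>'_def ek split: if_splits)
  have path: "is_path L p"
    unfolding is_path_def p_def using cf cf' uniq
    by (auto simp: less_Suc_eq)
  have dh: "downhill L J lam h p"
    unfolding downhill_def p_def using lt by (auto simp: less_Suc_eq \<eta>'_def)
  have lt': "?H (last p) < ?H \<eta>" using lt by (simp add: p_def \<eta>'_def)
  define A where "A = {\<zeta> \<in> configs L. ?H \<zeta> < ?H \<eta>}"
  define S where "S = {Max (?H ` set q) | q. is_path L q \<and> hd q = \<eta> \<and> last q \<in> A}"
  have inS: "?H \<eta> \<in> S"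
  proof -
    have "Max (?H ` set p) = ?H \<eta>" using lt by (simp add: p_def \<eta>'_def)
    moreover have "last p \<in> A" using cf' lt by (simp add: A_def p_def \<eta>'_def)
    ultimately show ?thesis unfolding S_def using path by (force simp: p_def)
  qed
  have lb: "\<And>x. x \<in> S \<Longrightarrow> ?H \<eta> \<le> x"
  proof -
    fix x assume "x \<in> S"
    then obtain q where q: "is_path L q" "hd q = \<eta>" and x: "x = Max (?H ` set q)"
      unfolding S_def by blast
    have "q \<noteq> []" using q by (simp add: is_path_def)
    then have "\<eta> \<in> set q" using q by (metis list.set_sel(1))
    then show "?H \<eta> \<le> x" unfolding x by (intro Max_ge) auto
  qed
  have "Phi L J lam h \<eta> A = ?H \<eta>"
    unfolding Phi_def S_def[symmetric] by (rule cInf_eq_minimum[OF inS lb])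
  then have "stab L J lam h \<eta> = 0" unfolding stab_def A_def by simp
  then show "(\<exists>p. is_path L p \<and> hd p = \<eta> \<and> downhill L J lam h p \<and> ?H (last p) < ?H \<eta>)
    \<and> stab L J lam h \<eta> = 0"
    using path dh lt' by (auto simp: p_def)
qed

end
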